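(* Let $\nu\ge0$, $\Psi_\nu(x)=I_{\nu+1}(x)/I_\nu(x)$ and $$\lambda_\nu(x)=\frac{\log\left(1-\frac{2}{x}\Psi_\nu(x)\right)}{\log\Psi_\nu(x)}.$$ Then $$\lim_{x\to\infty}\lambda_\nu(x)=\frac{4}{2\nu+1}.$$
   Context: $I_\nu$ denotes the modified Bessel function of the first kind of order $\nu$. *)

theory Defs
  imports "HOL-Analysis.Analysis"
begin

definition besselI :: "real \<Rightarrow> real \<Rightarrow> real" where
  "besselI \<nu> x = (\<Sum>k. (x / 2) powr (2 * real k + \<nu>) / (fact k * Gamma (real k + \<nu> + 1)))"

definition Psi :: "real \<Rightarrow> real \<Rightarrow> real" where
  "Psi \<nu> x = besselI (\<nu> + 1) x / besselI \<nu> x"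

definition lambda_nu :: "real \<Rightarrow> real \<Rightarrow> real" where
  "lambda_nu \<nu> x = ln (1 - (2 / x) * Psi \<nu> x) / ln (Psi \<nu> x)"

end

theory Submission
  imports Defs "HOL-Real_Asymp.Real_Asymp"
begin


lemma Gp: "(z::real) > 0 \<Longrightarrow> Gamma (z+1) = z * Gamma z"
  by (rule Gamma_plus1) (auto elim!: nonpos_Ints_cases)

definition coef :: "real \<Rightarrow> nat \<Rightarrow> real" where
  "coef \<nu> k = 1 / (fact k * Gamma (real k + \<nu> + 1))"

definition G :: "real \<Rightarrow> real \<Rightarrow> real" where
  "G \<nu> z = (\<Sum>k. coef \<nu> k * z ^ k)"

lemma coef_Suc: "\<nu> \<ge> 0 \<Longrightarrow> coef \<nu> (Suc k) = coef \<nu> k / ((real k + 1) * (real k + \<nu> + 1))"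
proof -
  assume h: "\<nu> \<ge> 0"
  have "Gamma (real (Suc k) + \<nu> + 1) = (real k + \<nu> + 1) * Gamma (real k + \<nu> + 1)"
    using Gp[of "real k + \<nu> + 1"] h by (simp add: algebra_simps)
  thus ?thesis by (simp add: coef_def field_simps)
qed

lemma coef_pos: "\<nu> \<ge> 0 \<Longrightarrow> coef \<nu> k > 0"
  unfolding coef_def by (intro divide_pos_pos mult_pos_pos) auto

lemma G_summable: assumes "\<nu> \<ge> 0" shows "summable (\<lambda>k. coef \<nu> k * z ^ k)"
proof (rule summable_ratio_test[where c="1/2" and N="nat \<lceil>2*\<bar>z\<bar>\<rceil>"])
  fix n assume n: "n \<ge> nat \<lceil>2*\<bar>z\<bar>\<rceil>"
  hence n2: "real n \<ge> 2*\<bar>z\<bar>" by linarith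
  have p: "(real n + 1) * (real n + \<nu> + 1) \<ge> real n + 1"
    using assms by (simp add: mult_le_cancel_left1)
  have ac: "\<bar>coef \<nu> n\<bar> = coef \<nu> n" using coef_pos[OF assms, of n] by simp
  have dp: "(real n + 1) * (real n + \<nu> + 1) > 0" using assms by simp
  have "norm (coef \<nu> (Suc n) * z ^ Suc n) = coef \<nu> n * \<bar>z\<bar>^n * (\<bar>z\<bar> / ((real n + 1) * (real n + \<nu> + 1)))"
    using dp assms by (simp add: coef_Suc[OF assms] abs_mult power_abs ac)
  also have "\<dots> \<le> coef \<nu> n * \<bar>z\<bar>^n * (1/2)"
  proof (rule mult_left_mono)
    have "\<bar>z\<bar> / ((real n + 1) * (real n + \<nu> + 1)) \<le> \<bar>z\<bar> / (real n + 1)"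
      using p assms by (intro divide_left_mono) auto
    also have "\<dots> \<le> 1/2" using n2 by (simp add: field_simps)
    finally show "\<bar>z\<bar> / ((real n + 1) * (real n + \<nu> + 1)) \<le> 1/2" .
  qed (use coef_pos[OF assms, of n] in auto)
  also have "\<dots> = 1/2 * norm (coef \<nu> n * z ^ n)"
    using ac by (simp add: abs_mult power_abs)
  finally show "norm (coef \<nu> (Suc n) * z ^ Suc n) \<le> 1/2 * norm (coef \<nu> n * z ^ n)" .
qed simp

lemma diffs_coef: assumes h: "\<nu> \<ge> 0" shows "diffs (coef \<nu>) = coef (\<nu>+1)"
proof
  fix n
  have g: "Gamma (real n + (\<nu>+1) + 1) > 0" using h by (intro Gamma_real_pos) simp
  have f: "(fact n :: real) > 0" by simp
  have e: "real (Suc n) + \<nu> + 1 = real n + (\<nu>+1) + 1" by simp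
  have fs: "(fact (Suc n) :: real) = (real n + 1) * fact n" by simp
  define Y where "Y = fact n * Gamma (real n + (\<nu>+1) + 1)"
  have Y: "Y > 0" unfolding Y_def using g f by simp
  have "diffs (coef \<nu>) n = real (Suc n) * (1 / ((real n + 1) * Y))"
    unfolding diffs_def coef_def e fs Y_def by (simp add: mult.assoc)
  also have "\<dots> = 1 / Y" using Y by (simp add: add.commute)
  finally show "diffs (coef \<nu>) n = coef (\<nu> + 1) n" unfolding coef_def Y_def .
qed

lemma G_deriv: "\<nu> \<ge> 0 \<Longrightarrow> (G \<nu> has_real_derivative G (\<nu>+1) z) (at z)"
  unfolding G_def
  using termdiffs_strong_converges_everywhere[of "coef \<nu>" z, OF G_summable] diffs_coef
  by simp

lemma G0: "G \<nu> 0 = 1 / Gamma (\<nu> + 1)"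
  unfolding G_def by (simp only: powser_zero) (simp add: coef_def)

lemma G_pos: assumes "\<nu> \<ge> 0" "z \<ge> 0" shows "G \<nu> z > 0"
  unfolding G_def
  by (rule suminf_pos2[where i=0]) (use G_summable[OF assms(1)] coef_pos[OF assms(1)] assms in
     \<open>auto intro!: mult_nonneg_nonneg less_imp_le[OF coef_pos] zero_le_power\<close>)

lemma alg1: fixes a b f g \<nu> w :: real
  assumes "a > 0" "b = a + \<nu> + 1" "b > 0" "f > 0" "g > 0"
  shows "(\<nu>+1)*(1/(a*f*(b*g))*w) + 1/(f*(b*g))*w = 1/(a*f*g)*w"
proof -
  have e: "\<nu>+1 = b - a" using assms by simp
  show ?thesis unfolding e using assms(1,3,4,5) by (simp add: field_simps)
qed

lemma G_rec: assumes "\<nu> \<ge> 0"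
  shows "G \<nu> z = (\<nu>+1) * G (\<nu>+1) z + z * G (\<nu>+2) z"
proof -
  define h where "h k = (if k = 0 then 0 else coef (\<nu>+2) (k-1) * z^k)" for k
  have "(\<lambda>k. z * (coef (\<nu>+2) k * z^k)) sums (z * G (\<nu>+2) z)"
    unfolding G_def using G_summable[of "\<nu>+2" z] assms by (intro sums_mult summable_sums) auto
  hence "(\<lambda>k. h (Suc k)) sums (z * G (\<nu>+2) z)" by (simp add: h_def algebra_simps)
  hence "h sums (z * G (\<nu>+2) z + h 0)" using sums_Suc_iff by blast
  hence 1: "h sums (z * G (\<nu>+2) z)" by (simp add: h_def)
  have 2: "(\<lambda>k. (\<nu>+1) * (coef (\<nu>+1) k * z^k)) sums ((\<nu>+1) * G (\<nu>+1) z)"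
    unfolding G_def using G_summable[of "\<nu>+1" z] assms by (intro sums_mult summable_sums) auto
  have eq: "(\<nu>+1) * (coef (\<nu>+1) k * z^k) + h k = coef \<nu> k * z^k" for k
  proof (cases k)
    case 0
    have "Gamma (\<nu> + 2) = (\<nu>+1) * Gamma (\<nu>+1)" using Gp[of "\<nu>+1"] assms by (simp add: add.assoc)
    moreover have "Gamma (\<nu>+1) > 0" using assms by simp
    moreover have "Gamma (\<nu>+2) > 0" using assms by (intro Gamma_real_pos) simp
    ultimately show ?thesis using 0 by (simp add: h_def coef_def field_simps)
  next
    case (Suc j)
    define g where "g = Gamma (real j + \<nu> + 2)"
    have g1: "Gamma (real j + \<nu> + 3) = (real j + \<nu> + 2) * g"
      using Gp[of "real j + \<nu> + 2"] assms unfolding g_def by (simp add: algebra_simps)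
    have g2: "g > 0" using assms unfolding g_def by simp
    have c1: "coef (\<nu>+1) (Suc j) = 1/((real j+1)*fact j*((real j+\<nu>+2)*g))"
      unfolding coef_def using g1 by (simp add: algebra_simps numeral_eq_Suc)
    have c2: "coef (\<nu>+2) j = 1/(fact j*((real j+\<nu>+2)*g))"
      unfolding coef_def using g1 by (simp add: algebra_simps numeral_eq_Suc)
    have c3: "coef \<nu> (Suc j) = 1/((real j+1)*fact j*g)"
      unfolding coef_def g_def by (simp add: algebra_simps)
    have n1: "real j + 1 \<noteq> 0" "real j + \<nu> + 2 \<noteq> 0" "(fact j::real) \<noteq> 0" "g \<noteq> 0"
      using assms g2 by auto
    have key: "(\<nu>+1)*(1/((real j+1)*fact j*((real j+\<nu>+2)*g))*z^Suc j) + 1/(fact j*((real j+\<nu>+2)*g))*z^Suc j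
       = 1/((real j+1)*fact j*g) * z^Suc j"
      by (rule alg1) (use assms g2 in auto)
    have hS: "h (Suc j) = coef (\<nu>+2) j * z^Suc j" by (simp add: h_def)
    show ?thesis unfolding Suc hS c1 c2 c3 by (rule key)
  qed
  from sums_add[OF 2 1] have "(\<lambda>k. coef \<nu> k * z^k) sums ((\<nu>+1) * G (\<nu>+1) z + z * G (\<nu>+2) z)"
    by (simp add: eq)
  thus ?thesis unfolding G_def by (simp add: sums_iff)
qed



definition w :: "real \<Rightarrow> real \<Rightarrow> real \<Rightarrow> real" where
  "w a b x = x / (a + sqrt (x^2 + b^2))"

lemma w_lim: fixes c b :: real assumes "c > 0" "b > 0"
  shows "((\<lambda>x. x * (1 - w c b x)) \<longlongrightarrow> c) at_top"
  unfolding w_def using assms by real_asymp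

lemma w_deriv: fixes a b t :: real assumes "a \<ge> 0" "b > 0"
  shows "(w a b has_real_derivative
     (a * sqrt (t^2+b^2) + b^2) / (sqrt (t^2+b^2) * (a + sqrt (t^2+b^2))^2)) (at t)"
proof -
  define s where "s = sqrt (t^2+b^2)"
  have sp: "s > 0" unfolding s_def using assms by (simp add: add_nonneg_pos)
  have ss: "s^2 = t^2 + b^2" unfolding s_def by simp
  have q: "t^2 + b^2 > 0" using assms by (simp add: add_nonneg_pos)
  have d1: "((\<lambda>x. x^2 + b^2) has_real_derivative 2*t) (at t)"
    by (auto intro!: derivative_eq_intros)
  have d2: "(sqrt has_real_derivative inverse (sqrt (t^2+b^2)) / 2) (at (t^2+b^2))"
    using q by (rule DERIV_real_sqrt)
  have d3: "((\<lambda>x. sqrt (x^2+b^2)) has_real_derivative (inverse s / 2) * (2*t)) (at t)"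
    using DERIV_chain2[OF d2 d1] unfolding s_def .
  have d4: "((\<lambda>x. a + sqrt (x^2+b^2)) has_real_derivative (inverse s / 2) * (2*t)) (at t)"
    using DERIV_add[OF DERIV_const d3] by simp
  have d5: "((\<lambda>x. x / (a + sqrt (x^2+b^2))) has_real_derivative
     (1 * (a+s) - t * ((inverse s / 2) * (2*t))) / ((a+s)*(a+s))) (at t)"
    using DERIV_divide[OF DERIV_ident d4] sp assms unfolding s_def by simp
  have "(1 * (a+s) - t * ((inverse s / 2) * (2*t))) / ((a+s)*(a+s))
      = (a * s + b^2) / (s * (a + s)^2)"
    using sp ss assms by (simp add: field_simps power2_eq_square)
  with d5 show ?thesis unfolding w_def s_def by simp
qed



lemma Fw: fixes c b t :: real assumes "c > 0" "b > 0" "t > 0"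
  shows "(1 - 2*c/t * w c b t - (w c b t)^2) -
     (c * sqrt (t^2+b^2) + b^2) / (sqrt (t^2+b^2) * (c + sqrt (t^2+b^2))^2)
   = (b^2 - c^2 - c - b^2 / sqrt (t^2+b^2)) / (c + sqrt (t^2+b^2))^2"
proof -
  define s where "s = sqrt (t^2+b^2)"
  have sp: "s > 0" unfolding s_def using assms by (simp add: add_nonneg_pos)
  have ss: "t^2 = s^2 - b^2" unfolding s_def by simp
  have cs: "c + s > 0" using sp assms by simp
  have W: "2*c/t * w c b t = 2*c/(c+s)" unfolding w_def s_def[symmetric] using assms cs by simp
  have W2: "(w c b t)^2 = t^2/(c+s)^2" unfolding w_def s_def[symmetric] by (simp add: power_divide)
  have e1: "1 - 2*c/(c+s) - t^2/(c+s)^2 = (b^2 - c^2)/(c+s)^2"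
  proof -
    have n: "(c+s)^2 - 2*c*(c+s) - t^2 = b^2 - c^2" unfolding ss by (simp add: power2_eq_square algebra_simps)
    have "1 - 2*c/(c+s) - t^2/(c+s)^2 = ((c+s)^2 - 2*c*(c+s) - t^2)/(c+s)^2"
      using cs by (simp add: diff_divide_distrib power2_eq_square)
    thus ?thesis unfolding n .
  qed
  have e2: "(c * s + b^2) / (s * (c + s)^2) = (c + b^2 / s) / (c + s)^2" using cs sp by (simp add: field_simps)
  show ?thesis unfolding s_def[symmetric] W W2 e1 e2
    by (simp add: diff_divide_distrib add_divide_distrib divide_divide_eq_left)
qed

definition uu :: "real \<Rightarrow> real \<Rightarrow> real" where
  "uu \<nu> x = x/2 * G (\<nu>+1) (x^2/4) / G \<nu> (x^2/4)"

lemma besselI_eq: assumes "x > 0" "\<nu> \<ge> 0"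
  shows "besselI \<nu> x = (x/2) powr \<nu> * G \<nu> (x^2/4)"
proof -
  have "(\<lambda>k. (x / 2) powr (2 * real k + \<nu>) / (fact k * Gamma (real k + \<nu> + 1)))
      = (\<lambda>k. (x/2) powr \<nu> * (coef \<nu> k * (x^2/4)^k))"
  proof
    fix k
    have "(x / 2) powr (2 * real k + \<nu>) = (x/2) powr (real (2*k)) * (x/2) powr \<nu>"
      by (simp add: powr_add)
    also have "\<dots> = (x/2)^(2*k) * (x/2) powr \<nu>" using powr_realpow[of "x/2" "2*k"] assms by simp
    also have "(x/2)^(2*k) = (x^2/4)^k" by (simp add: power_mult power_divide)
    finally have "(x / 2) powr (2 * real k + \<nu>) = (x/2) powr \<nu> * (x^2/4)^k" by simp
    thus "(x / 2) powr (2 * real k + \<nu>) / (fact k * Gamma (real k + \<nu> + 1))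
      = (x/2) powr \<nu> * (coef \<nu> k * (x^2/4)^k)" by (simp add: coef_def)
  qed
  thus ?thesis unfolding besselI_def G_def
    using suminf_mult[OF G_summable[OF assms(2)]] by simp
qed

lemma Psi_eq: assumes "x > 0" "\<nu> \<ge> 0" shows "Psi \<nu> x = uu \<nu> x"
proof -
  have "(x/2) powr (\<nu>+1) = (x/2) powr \<nu> * (x/2)" using assms by (simp add: powr_add)
  moreover have "(x/2) powr \<nu> > 0" using assms by simp
  moreover have "G \<nu> (x^2/4) > 0" using G_pos assms by simp
  ultimately show ?thesis unfolding Psi_def uu_def using assms
    by (simp only: besselI_eq assms add_nonneg_nonneg zero_le_one) (simp add: field_simps)
qed



lemma Gc_deriv: assumes "\<nu> \<ge> 0"
  shows "((\<lambda>x. G \<nu> (x^2/4)) has_real_derivative G (\<nu>+1) (x^2/4) * (x/2)) (at x)"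
proof -
  have d: "((\<lambda>x. x^2/4) has_real_derivative x/2) (at x)"
    by (auto intro!: derivative_eq_intros)
  show ?thesis using DERIV_chain2[OF G_deriv[OF assms] d] .
qed

lemma u_deriv: assumes "\<nu> \<ge> 0" "x \<noteq> 0"
  shows "(uu \<nu> has_real_derivative 1 - (2*(\<nu>+1/2)/x) * uu \<nu> x - (uu \<nu> x)^2) (at x)"
proof -
  define A where "A = G \<nu> (x^2/4)"
  define B where "B = G (\<nu>+1) (x^2/4)"
  define C where "C = G (\<nu>+2) (x^2/4)"
  have Ap: "A > 0" unfolding A_def using G_pos assms by simp
  have dA: "((\<lambda>x. G \<nu> (x^2/4)) has_real_derivative B * (x/2)) (at x)"
    unfolding B_def by (rule Gc_deriv[OF assms(1)])
  have dB0: "((\<lambda>x. G (\<nu>+1) (x^2/4)) has_real_derivative G (\<nu>+1+1) (x^2/4) * (x/2)) (at x)"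
    using assms by (intro Gc_deriv) simp
  have dB: "((\<lambda>x. G (\<nu>+1) (x^2/4)) has_real_derivative C * (x/2)) (at x)"
    using dB0 unfolding C_def by (simp add: add.assoc)
  have df: "((\<lambda>x. x/2 * G (\<nu>+1) (x^2/4)) has_real_derivative 1/2 * B + x/2 * (C * (x/2))) (at x)"
    using DERIV_mult[OF DERIV_cdivide[OF DERIV_ident, of 2] dB] unfolding B_def by (simp add: mult_ac)
  have du: "(uu \<nu> has_real_derivative
      ((1/2 * B + x/2 * (C * (x/2))) * A - x/2 * B * (B * (x/2))) / (A * A)) (at x)"
    unfolding uu_def using DERIV_divide[OF df dA] Ap unfolding A_def B_def by simp
  have rec: "A = (\<nu>+1) * B + x^2/4 * C" unfolding A_def B_def C_def using G_rec[OF assms(1)] .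
  have hC: "x/2 * (C * (x/2)) = A - (\<nu>+1) * B" using rec by (simp add: power2_eq_square field_simps)
  have u: "uu \<nu> x = x/2 * B / A" unfolding uu_def A_def B_def ..
  have "((1/2 * B + x/2 * (C * (x/2))) * A - x/2 * B * (B * (x/2))) / (A * A)
      = 1 - (2*(\<nu>+1/2)/x) * uu \<nu> x - (uu \<nu> x)^2"
    unfolding hC u using Ap assms(2) by (simp add: field_simps power2_eq_square)
  with du show ?thesis by simp
qed

lemma no_cross:
  fixes D D' :: "real \<Rightarrow> real"
  assumes deriv: "\<And>t. t > 0 \<Longrightarrow> (D has_real_derivative D' t) (at t)"
    and zero: "\<And>t. t > 0 \<Longrightarrow> D t = 0 \<Longrightarrow> D' t < 0"
    and near0: "eventually (\<lambda>x. D x < 0) (at_right 0)"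
    and x: "x > 0"
  shows "D x < 0"
proof (rule ccontr)
  assume "\<not> D x < 0"
  hence Dx: "D x \<ge> 0" by simp
  from near0 obtain b where b: "b > 0" "\<And>y. y > 0 \<Longrightarrow> y < b \<Longrightarrow> D y < 0"
    unfolding eventually_at_right_field by auto
  define d where "d = min (b/2) (x/2)"
  have d: "0 < d" "d < x" "D d < 0" using b x unfolding d_def by auto
  have cont: "continuous_on {d..x} D"
    using d by (intro continuous_at_imp_continuous_on ballI) (auto intro!: DERIV_isCont[OF deriv])
  define Z where "Z = {t \<in> {d..x}. D t = 0}"
  have Zne: "Z \<noteq> {}" using IVT'[of D d 0 x, OF _ Dx _ cont] d unfolding Z_def by auto
  have Zc: "closed Z" unfolding Z_def by (rule continuous_closed_preimage_constant[OF cont]) simp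
  have Zb: "bdd_below Z" unfolding Z_def by (auto intro: bdd_belowI[of _ d])
  define t where "t = Inf Z"
  have tZ: "t \<in> Z" unfolding t_def using closed_contains_Inf[OF Zne Zb Zc] .
  hence t: "d \<le> t" "t \<le> x" "D t = 0" unfolding Z_def by auto
  have td: "d < t" using t d by (cases "d = t") auto
  have neg: "D y < 0" if yy: "d \<le> y" "y < t" for y
  proof (rule ccontr)
    assume "\<not> D y < 0"
    hence "D y \<ge> 0" by simp
    have cy: "continuous_on {d..y} D" using that t by (intro continuous_on_subset[OF cont]) auto
    obtain r where r: "d \<le> r" "r \<le> y" "D r = 0" using IVT'[of D d 0 y, OF _ \<open>D y \<ge> 0\<close> _ cy] d yy by auto
    hence "r \<in> Z" using yy t unfolding Z_def by auto
    hence "t \<le> r" unfolding t_def using Zb by (simp add: cInf_lower)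
    thus False using r yy by simp
  qed
  have "D' t < 0" using zero t d by simp
  then obtain e where e: "e > 0" "\<And>h. h > 0 \<Longrightarrow> h < e \<Longrightarrow> D t < D (t - h)"
    using DERIV_neg_dec_left[OF deriv[of t]] t d by force
  define h where "h = min (e/2) ((t-d)/2)"
  have "D t < D (t - h)" using e td unfolding h_def by (intro e(2)) auto
  moreover have "h \<le> (t-d)/2" "h > 0" using td e unfolding h_def by (auto simp: min_def)
  hence "D (t - h) < 0" using td by (intro neg) auto
  ultimately show False using t \<open>D (t - h) < 0\<close> by simp
qed

lemma ev_neg: fixes D :: "real \<Rightarrow> real"
  assumes "((\<lambda>x. D x / x) \<longlongrightarrow> L) (at_right 0)" "L < 0"
  shows "eventually (\<lambda>x. D x < 0) (at_right 0)"
proof -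
  have "eventually (\<lambda>x. D x / x < 0) (at_right 0)" using order_tendstoD(2)[OF assms] .
  with eventually_at_right_less[of 0] show ?thesis
    by eventually_elim (simp add: divide_less_0_iff)
qed

lemma u_over_x: assumes "\<nu> \<ge> 0"
  shows "((\<lambda>x. uu \<nu> x / x) \<longlongrightarrow> 1 / (2*(\<nu>+1))) (at_right 0)"
proof -
  define f where "f x = G (\<nu>+1) (x^2/4) / (2 * G \<nu> (x^2/4))" for x
  have c1: "isCont (\<lambda>x. G (\<nu>+1) (x^2/4)) 0" using DERIV_isCont[OF Gc_deriv[of "\<nu>+1"]] assms by simp
  have c2: "isCont (\<lambda>x. G \<nu> (x^2/4)) 0" using DERIV_isCont[OF Gc_deriv[of "\<nu>"]] assms by simp
  have G0p: "G \<nu> 0 > 0" using G_pos assms by simp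
  have "isCont f 0" unfolding f_def using c1 c2 G0p
    by (intro isCont_divide isCont_mult continuous_intros) auto
  hence "(f \<longlongrightarrow> f 0) (at 0)" by (rule isContD)
  hence l: "(f \<longlongrightarrow> f 0) (at_right 0)" by (rule tendsto_mono[OF at_le, rotated]) simp
  have g1: "Gamma (\<nu>+2) = (\<nu>+1) * Gamma (\<nu>+1)" using Gp[of "\<nu>+1"] assms by (simp add: add.assoc)
  have g2: "Gamma (\<nu>+1) > 0" using assms by simp
  have "f 0 = 1 / (2*(\<nu>+1))" unfolding f_def using g1 g2 assms mult_pos_pos[OF _ g2, of "\<nu>+1"]
    by (simp add: G0 add.assoc field_simps)
  with l have "(f \<longlongrightarrow> 1 / (2*(\<nu>+1))) (at_right 0)" by simp
  moreover have "eventually (\<lambda>x. f x = uu \<nu> x / x) (at_right 0)"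
    using eventually_at_right_less[of 0] by eventually_elim (simp add: f_def uu_def)
  ultimately show ?thesis by (rule tendsto_cong[THEN iffD1, rotated])
qed

lemma w_over_x: assumes "c > 0" "b > 0"
  shows "((\<lambda>x. w c b x / x) \<longlongrightarrow> 1 / (c + b)) (at_right 0)"
proof -
  have "((\<lambda>x. 1 / (c + sqrt (x^2 + b^2))) \<longlongrightarrow> 1 / (c + sqrt (0^2 + b^2))) (at_right 0)"
    using assms by (intro tendsto_intros) (auto simp: add_pos_nonneg)
  hence l: "((\<lambda>x. 1 / (c + sqrt (x^2 + b^2))) \<longlongrightarrow> 1 / (c + b)) (at_right 0)" using assms by simp
  have "eventually (\<lambda>x. 1 / (c + sqrt (x^2 + b^2)) = w c b x / x) (at_right 0)"
    using eventually_at_right_less[of 0] by eventually_elim (simp add: w_def)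
  with l show ?thesis by (rule tendsto_cong[THEN iffD1, rotated])
qed



lemma bounds: assumes nu: "\<nu> \<ge> 0" and x: "x > 0"
  shows "w (\<nu>+1/2) (2*(\<nu>+1/2)+2) x < uu \<nu> x \<and> uu \<nu> x < w (\<nu>+1/2) (\<nu>+1/2) x"
proof -
  define c where "c = \<nu> + 1/2"
  have c: "c > 0" unfolding c_def using nu by simp
  define F where "F t y = 1 - (2*c/t) * y - y^2" for t y
  have ud: "(uu \<nu> has_real_derivative F t (uu \<nu> t)) (at t)" if "t > 0" for t
    unfolding F_def c_def using u_deriv[OF nu] that by simp
  define W' where "W' b t = (c * sqrt (t^2+b^2) + b^2) / (sqrt (t^2+b^2) * (c + sqrt (t^2+b^2))^2)" for b t
  have wd: "(w c b has_real_derivative W' b t) (at t)" if "b > 0" for b t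
    unfolding W'_def using w_deriv[of c b t] c that by simp
  have FW: "F t (w c b t) - W' b t = (b^2 - c^2 - c - b^2 / sqrt (t^2+b^2)) / (c + sqrt (t^2+b^2))^2"
    if "b > 0" "t > 0" for b t
    unfolding F_def W'_def using Fw[OF c that] by simp
  have ux: "((\<lambda>x. uu \<nu> x / x) \<longlongrightarrow> 1 / (2*c+1)) (at_right 0)"
    using u_over_x[OF nu] unfolding c_def by (simp add: algebra_simps)
  have up: "uu \<nu> x - w c c x < 0"
  proof (rule no_cross[where D = "\<lambda>x. uu \<nu> x - w c c x" and D' = "\<lambda>t. F t (uu \<nu> t) - W' c t"])
    fix t :: real assume t: "t > 0"
    show "((\<lambda>x. uu \<nu> x - w c c x) has_real_derivative F t (uu \<nu> t) - W' c t) (at t)"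
      using ud[OF t] wd[OF c] by (rule DERIV_diff)
  next
    fix t :: real assume t: "t > 0" and z: "uu \<nu> t - w c c t = 0"
    define s where "s = sqrt (t^2 + c^2)"
    have sp: "s > 0" unfolding s_def using c by (simp add: add_nonneg_pos)
    have "F t (uu \<nu> t) - W' c t = (c^2 - c^2 - c - c^2 / s) / (c + s)^2"
      using FW[OF c t] z unfolding s_def by simp
    also have "\<dots> < 0"
    proof -
      have "c^2 / s \<ge> 0" using sp by simp
      hence "c^2 - c^2 - c - c^2 / s < 0" using c by linarith
      moreover have "(c + s)^2 > 0" using sp c by simp
      ultimately show ?thesis by (rule divide_neg_pos)
    qed
    finally show "F t (uu \<nu> t) - W' c t < 0" .
  next
    have "((\<lambda>x. (uu \<nu> x - w c c x) / x) \<longlongrightarrow> 1/(2*c+1) - 1/(c+c)) (at_right 0)"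
      using tendsto_diff[OF ux w_over_x[OF c c]] by (simp add: diff_divide_distrib)
    moreover have "1/(2*c+1) - 1/(c+c) < 0" using c by (simp add: field_simps add_pos_pos)
    ultimately show "eventually (\<lambda>x. uu \<nu> x - w c c x < 0) (at_right 0)" by (rule ev_neg)
  qed (rule x)
  define b where "b = 2*c+2"
  have b: "b > 0" unfolding b_def using c by simp
  have lo: "w c b x - uu \<nu> x < 0"
  proof (rule no_cross[where D = "\<lambda>x. w c b x - uu \<nu> x" and D' = "\<lambda>t. W' b t - F t (uu \<nu> t)"])
    fix t :: real assume t: "t > 0"
    show "((\<lambda>x. w c b x - uu \<nu> x) has_real_derivative W' b t - F t (uu \<nu> t)) (at t)"
      using wd[OF b] ud[OF t] by (rule DERIV_diff)
  next
    fix t :: real assume t: "t > 0" and z: "w c b t - uu \<nu> t = 0"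
    define s where "s = sqrt (t^2 + b^2)"
    have "b^2 < t^2 + b^2" using t by simp
    hence sb: "s > b" unfolding s_def using b real_less_rsqrt by (metis abs_of_pos real_sqrt_abs real_sqrt_less_iff)
    have sp: "s > 0" using sb b by simp
    have q: "b^2 / s < b" using sb b sp by (simp add: field_simps power2_eq_square)
    have "b^2 - c^2 - c - b = (c+1)*(3*c+2)" unfolding b_def by (simp add: algebra_simps power2_eq_square)
    hence pos: "b^2 - c^2 - c - b^2 / s > 0" using q c by (smt (verit) mult_pos_pos)
    have "W' b t - F t (uu \<nu> t) = - ((b^2 - c^2 - c - b^2 / s) / (c + s)^2)"
      using FW[OF b t] z unfolding s_def by simp
    also have "\<dots> < 0" using pos sp c by simp
    finally show "W' b t - F t (uu \<nu> t) < 0" .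
  next
    have "((\<lambda>x. (w c b x - uu \<nu> x) / x) \<longlongrightarrow> 1/(c+b) - 1/(2*c+1)) (at_right 0)"
      using tendsto_diff[OF w_over_x[OF c b] ux] by (simp add: diff_divide_distrib)
    moreover have "1/(c+b) - 1/(2*c+1) < 0"
    proof -
      have "1/(c+b) < 1/(2*c+1)" using c unfolding b_def
        by (intro divide_strict_left_mono) (auto intro!: mult_pos_pos)
      thus ?thesis by simp
    qed
    ultimately show "eventually (\<lambda>x. w c b x - uu \<nu> x < 0) (at_right 0)" by (rule ev_neg)
  qed (rule x)
  show ?thesis using up lo unfolding c_def b_def by simp
qed



lemma xlog: fixes q :: "real \<Rightarrow> real"
  assumes q: "(q \<longlongrightarrow> L) at_top"
  shows "((\<lambda>x. x * ln (1 - q x / x)) \<longlongrightarrow> - L) at_top"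
proof -
  have qx: "((\<lambda>x. q x / x) \<longlongrightarrow> 0) at_top"
  proof -
    have "((\<lambda>x. q x * inverse x) \<longlongrightarrow> L * 0) at_top"
      by (intro tendsto_mult q tendsto_inverse_0_at_top filterlim_ident)
    thus ?thesis by (simp add: divide_inverse)
  qed
  have ev0: "eventually (\<lambda>x. q x / x < 1/2) at_top"
    using order_tendstoD(2)[OF qx, of "1/2"] by simp
  have ev: "eventually (\<lambda>x. q x / x < 1/2 \<and> x > 0) at_top"
    using ev0 eventually_gt_at_top[of 0] by eventually_elim auto
  have up: "eventually (\<lambda>x. x * ln (1 - q x / x) \<le> - q x) at_top"
    using ev
  proof eventually_elim
    case (elim x)
    have pos: "1 - q x / x > 0" using elim by linarith
    have "ln (1 - q x / x) \<le> (1 - q x / x) - 1" using pos by (rule ln_le_minus_one)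
    hence "x * ln (1 - q x / x) \<le> x * (- (q x / x))" using elim by (intro mult_left_mono) auto
    thus ?case using elim by simp
  qed
  have lo: "eventually (\<lambda>x. - q x / (1 - q x / x) \<le> x * ln (1 - q x / x)) at_top"
    using ev
  proof eventually_elim
    case (elim x)
    define y where "y = 1 - q x / x"
    have yp: "y > 0" using elim unfolding y_def by linarith
    have "ln (1/y) \<le> 1/y - 1" using yp by (intro ln_le_minus_one) simp
    hence "ln y \<ge> 1 - 1/y" using yp by (simp add: ln_div)
    hence "x * ln y \<ge> x * (1 - 1/y)" using elim by (intro mult_left_mono) auto
    moreover have "x * (1 - 1/y) = - q x / y" using yp elim unfolding y_def
      by (simp add: field_simps)
    ultimately show ?case unfolding y_def by simp
  qed
  have l1: "((\<lambda>x. - q x / (1 - q x / x)) \<longlongrightarrow> - L / (1 - 0)) at_top"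
    by (intro tendsto_intros q qx) simp
  have l2: "((\<lambda>x. - q x) \<longlongrightarrow> - L) at_top" by (intro tendsto_intros q)
  have l1': "((\<lambda>x. - q x / (1 - q x / x)) \<longlongrightarrow> - L) at_top" using l1 by simp
  show ?thesis by (rule tendsto_sandwich[OF lo up l1' l2])
qed

theorem mainTheorem6:
  fixes \<nu> :: real
  assumes "\<nu> \<ge> 0"
  shows "((\<lambda>x. lambda_nu \<nu> x) \<longlongrightarrow> 4 / (2 * \<nu> + 1)) at_top"
proof -
  define c where "c = \<nu> + 1/2"
  have c: "c > 0" unfolding c_def using assms by simp
  define p where "p x = x * (1 - uu \<nu> x)" for x
  have p: "(p \<longlongrightarrow> c) at_top"
  proof (rule tendsto_sandwich[of "\<lambda>x. x * (1 - w c c x)" _ _ "\<lambda>x. x * (1 - w c (2*c+2) x)"])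
    show "eventually (\<lambda>x. x * (1 - w c c x) \<le> p x) at_top"
      using eventually_gt_at_top[of 0] proof eventually_elim
      case (elim x) thus ?case using bounds[OF assms elim] unfolding p_def c_def
        by (intro mult_left_mono) auto
    qed
    show "eventually (\<lambda>x. p x \<le> x * (1 - w c (2*c+2) x)) at_top"
      using eventually_gt_at_top[of 0] proof eventually_elim
      case (elim x) thus ?case using bounds[OF assms elim] unfolding p_def c_def
        by (intro mult_left_mono) auto
    qed
  qed (use w_lim c in auto)
  have u: "(uu \<nu> \<longlongrightarrow> 1) at_top"
  proof -
    have "((\<lambda>x. 1 - p x * inverse x) \<longlongrightarrow> 1 - c * 0) at_top"
      by (intro tendsto_intros p tendsto_inverse_0_at_top filterlim_ident)
    moreover have "eventually (\<lambda>x. 1 - p x * inverse x = uu \<nu> x) at_top"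
      using eventually_gt_at_top[of 0] by eventually_elim (simp add: p_def field_simps)
    ultimately show ?thesis by (simp add: tendsto_cong)
  qed
  have n: "((\<lambda>x. x * ln (1 - (2 * uu \<nu> x) / x)) \<longlongrightarrow> - 2) at_top"
    using xlog[of "\<lambda>x. 2 * uu \<nu> x" 2] tendsto_mult[OF tendsto_const u, of 2] by simp
  have d: "((\<lambda>x. x * ln (1 - p x / x)) \<longlongrightarrow> - c) at_top" by (rule xlog[OF p])
  have r: "((\<lambda>x. (x * ln (1 - (2 * uu \<nu> x) / x)) / (x * ln (1 - p x / x))) \<longlongrightarrow> (-2) / (-c)) at_top"
    using c by (intro tendsto_divide n d) simp
  have e: "eventually (\<lambda>x. (x * ln (1 - (2 * uu \<nu> x) / x)) / (x * ln (1 - p x / x)) = lambda_nu \<nu> x) at_top"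
    using eventually_gt_at_top[of 0]
  proof eventually_elim
    case (elim x)
    have "1 - p x / x = uu \<nu> x" using elim unfolding p_def by (simp add: field_simps)
    moreover have "Psi \<nu> x = uu \<nu> x" using Psi_eq[OF elim assms] .
    ultimately show ?case using elim unfolding lambda_nu_def by simp
  qed
  have "(-2) / (-c) = 4 / (2 * \<nu> + 1)" unfolding c_def using assms by (simp add: field_simps)
  with r e show ?thesis by (simp add: tendsto_cong)
qed

end
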